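(* Let $(\mathfrak{g},[\cdot,\cdot]_{\mathfrak{g}})$ be a Leibniz algebra, $(V;\rho^L,\rho^R)$ a representation, and $T:V\to\mathfrak{g}$ a relative Rota-Baxter operator. Then for every $n\ge1$ and every $f\in\mathrm{Hom}(\otimes^nV,\mathfrak{g})$, $\partial_Tf=(-1)^{n-1}\{T,f\}$.
   Context: A Leibniz algebra is a vector space $\mathfrak{g}$ with bilinear $[\cdot,\cdot]_{\mathfrak{g}}$ satisfying $[x,[y,z]_{\mathfrak{g}}]_{\mathfrak{g}}=[[x,y]_{\mathfrak{g}},z]_{\mathfrak{g}}+[y,[x,z]_{\mathfrak{g}}]_{\mathfrak{g}}$. A representation $(V;\rho^L,\rho^R)$: linear $\rho^L,\rho^R:\mathfrak{g}\to\mathfrak{gl}(V)$ with $\rho^L([x,y]_{\mathfrak{g}})=[\rho^L(x),\rho^L(y)]$, $\rho^R([x,y]_{\mathfrak{g}})=[\rho^L(x),\rho^R(y)]$, $\rho^R(y)\rho^L(x)=-\rho^R(y)\rho^R(x)$. A relative Rota-Baxter operator is a linear $T:V\to\mathfrak{g}$ with $[Tv_1,Tv_2]_{\mathfrak{g}}=T(\rho^L(Tv_1)v_2+\rho^R(Tv_2)v_1)$. $C^n(V,\mathfrak{g})=\mathrm{Hom}(\otimes^nV,\mathfrak{g})$, and $\partial_T:C^n\to C^{n+1}$ is $(\partial_Tf)(v_1,\dots,v_{n+1})=\sum_{i=1}^n(-1)^{i+1}[Tv_i,f(v_1,\dots,\hat v_i,\dots,v_{n+1})]_{\mathfrak{g}}-\sum_{i=1}^n(-1)^{i+1}T\rho^R(f(v_1,\dots,\hat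 v_i,\dots,v_{n+1}))v_i+(-1)^{n+1}[f(v_1,\dots,v_n),Tv_{n+1}]_{\mathfrak{g}}+(-1)^nT\rho^L(f(v_1,\dots,v_n))v_{n+1}+\sum_{1\le i<j\le n+1}(-1)^if(v_1,\dots,\hat v_i,\dots,v_{j-1},\rho^L(Tv_i)v_j+\rho^R(Tv_j)v_i,v_{j+1},\dots,v_{n+1})$. A permutation $\sigma\in\mathbb{S}_N$ is an $(i_1,\dots,i_k)$-shuffle ($i_1+\dots+i_k=N$) if it is increasing on each of the consecutive blocks of positions of sizes $i_1,\dots,i_k$; $\mathbb{S}_{(i_1,\dots,i_k)}$ is the set of these, $(-1)^\sigma$ the sign. The bracket $\{\cdot,\cdot\}$ on $\bigoplus_{n\ge1}C^n(V,\mathfrak{g})$ is defined for $g_1\in C^m$, $g_2\in C^n$ by $\{g_1,g_2\}(v_1,\dots,v_{m+n})=$ $\sum_{k=1}^m\sum_{\sigma\in\mathbb{S}_{(k-1,n)}}(-1)^{(k-1)n+1}(-1)^\sigma g_1(v_{\sigma(1)},\dots,v_{\sigma(k-1)},\rho^L(g_2(v_{\sigma(k)},\dots,v_{\sigma(k+n-1)}))v_{k+n},v_{k+n+1},\dots,v_{m+n})$ $+\sum_{k=2}^{m+1}\sum_{\sigma\in\mathbb{S}_{(k-2,n,1)},\,\sigma(k+n-2)=k+n-1}(-1)^{kn}(-1)^\sigma g_1(v_{\sigma(1)},\dots,v_{\sigma(k-2)},\rho^R(g_2(v_{\sigma(k-1)},\dots,v_{\sigma(k+n-2)}))v_{\sigma(k+n-1)},v_{k+n},\dots,v_{m+n})$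 $+\sum_{k=1}^m\sum_{\sigma\in\mathbb{S}_{(k-1,n-1)}}(-1)^{(k-1)n}(-1)^\sigma[g_2(v_{\sigma(k)},\dots,v_{\sigma(k+n-2)},v_{k+n-1}),g_1(v_{\sigma(1)},\dots,v_{\sigma(k-1)},v_{k+n},\dots,v_{m+n})]_{\mathfrak{g}}$ $+\sum_{\sigma\in\mathbb{S}_{(m,n-1)}}(-1)^{mn+1}(-1)^\sigma[g_1(v_{\sigma(1)},\dots,v_{\sigma(m)}),g_2(v_{\sigma(m+1)},\dots,v_{\sigma(m+n-1)},v_{m+n})]_{\mathfrak{g}}$ $+\sum_{k=1}^n\sum_{\sigma\in\mathbb{S}_{(k-1,m)}}(-1)^{m(k+n-1)}(-1)^\sigma g_2(v_{\sigma(1)},\dots,v_{\sigma(k-1)},\rho^L(g_1(v_{\sigma(k)},\dots,v_{\sigma(k+m-1)}))v_{k+m},v_{k+m+1},\dots,v_{m+n})$ $+\sum_{k=1}^n\sum_{\sigma\in\mathbb{S}_{(k-1,m,1)},\,\sigma(k+m-1)=k+m}(-1)^{m(k+n-1)+1}(-1)^\sigma g_2(v_{\sigma(1)},\dots,v_{\sigma(k-1)},\rho^R(g_1(v_{\sigma(k)},\dots,v_{\sigma(k+m-1)}))v_{\sigma(k+m)},v_{k+m+1},\dots,v_{m+n})$. Here $T$ is regarded as an element of $C^1(V,\mathfrak{g})$. *)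

theory Defs
  imports Complex_Main "HOL-Combinatorics.Permutations"
begin

text \<open>Vectors v_1,...,v_N are given as a list vs; argument i (1-indexed) is vs ! (i - 1).\<close>

definition arg :: "'v list \<Rightarrow> nat \<Rightarrow> 'v" where
  "arg vs i = vs ! (i - 1)"

definition same_block :: "nat list \<Rightarrow> nat \<Rightarrow> nat \<Rightarrow> bool" where
  "same_block bs a b \<longleftrightarrow> (\<exists>j < length bs. sum_list (take j bs) < a \<and> a \<le> sum_list (take (Suc j) bs)
      \<and> sum_list (take j bs) < b \<and> b \<le> sum_list (take (Suc j) bs))"

text \<open>(i_1,...,i_k)-shuffles: permutations of {1..N}, N = i_1+...+i_k, increasing on each block.\<close>
definition shuffles :: "nat list \<Rightarrow> (nat \<Rightarrow> nat) set" where
  "shuffles bs = {\<sigma>. \<sigma> permutes {1..sum_list bs} \<and>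
      (\<forall>a b. 1 \<le> a \<longrightarrow> a < b \<longrightarrow> b \<le> sum_list bs \<longrightarrow> same_block bs a b \<longrightarrow> \<sigma> a < \<sigma> b)}"

definition multilinear ::
  "('k::field \<Rightarrow> 'v::ab_group_add \<Rightarrow> 'v) \<Rightarrow> ('k \<Rightarrow> 'g::ab_group_add \<Rightarrow> 'g) \<Rightarrow> nat \<Rightarrow> ('v list \<Rightarrow> 'g) \<Rightarrow> bool" where
  "multilinear sV sG n f \<longleftrightarrow>
     (\<forall>xs i. length xs = n \<longrightarrow> i < n \<longrightarrow> Vector_Spaces.linear sV sG (\<lambda>v. f (xs[i := v])))"

definition is_leibniz_algebra :: "('k::field \<Rightarrow> 'g::ab_group_add \<Rightarrow> 'g) \<Rightarrow> ('g \<Rightarrow> 'g \<Rightarrow> 'g) \<Rightarrow> bool" where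
  "is_leibniz_algebra sG br \<longleftrightarrow> vector_space sG \<and>
     (\<forall>x. Vector_Spaces.linear sG sG (br x)) \<and> (\<forall>y. Vector_Spaces.linear sG sG (\<lambda>x. br x y)) \<and>
     (\<forall>x y z. br x (br y z) = br (br x y) z + br y (br x z))"

definition is_representation ::
  "('k::field \<Rightarrow> 'g::ab_group_add \<Rightarrow> 'g) \<Rightarrow> ('g \<Rightarrow> 'g \<Rightarrow> 'g) \<Rightarrow> ('k \<Rightarrow> 'v::ab_group_add \<Rightarrow> 'v)
    \<Rightarrow> ('g \<Rightarrow> 'v \<Rightarrow> 'v) \<Rightarrow> ('g \<Rightarrow> 'v \<Rightarrow> 'v) \<Rightarrow> bool" where
  "is_representation sG br sV rhoL rhoR \<longleftrightarrow> vector_space sV \<and>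
     (\<forall>x. Vector_Spaces.linear sV sV (rhoL x)) \<and> (\<forall>x. Vector_Spaces.linear sV sV (rhoR x)) \<and>
     (\<forall>v. Vector_Spaces.linear sG sV (\<lambda>x. rhoL x v)) \<and> (\<forall>v. Vector_Spaces.linear sG sV (\<lambda>x. rhoR x v)) \<and>
     (\<forall>x y. rhoL (br x y) = rhoL x \<circ> rhoL y - rhoL y \<circ> rhoL x) \<and>
     (\<forall>x y. rhoR (br x y) = rhoL x \<circ> rhoR y - rhoR y \<circ> rhoL x) \<and>
     (\<forall>x y. rhoR y \<circ> rhoL x = - (rhoR y \<circ> rhoR x))"

definition is_relative_RB ::
  "('k::field \<Rightarrow> 'g::ab_group_add \<Rightarrow> 'g) \<Rightarrow> ('g \<Rightarrow> 'g \<Rightarrow> 'g) \<Rightarrow> ('k \<Rightarrow> 'v::ab_group_add \<Rightarrow> 'v)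
    \<Rightarrow> ('g \<Rightarrow> 'v \<Rightarrow> 'v) \<Rightarrow> ('g \<Rightarrow> 'v \<Rightarrow> 'v) \<Rightarrow> ('v \<Rightarrow> 'g) \<Rightarrow> bool" where
  "is_relative_RB sG br sV rhoL rhoR T \<longleftrightarrow> Vector_Spaces.linear sV sG T \<and>
     (\<forall>v1 v2. br (T v1) (T v2) = T (rhoL (T v1) v2 + rhoR (T v2) v1))"

definition coboundary ::
  "('k::field \<Rightarrow> 'g::ab_group_add \<Rightarrow> 'g) \<Rightarrow> ('g \<Rightarrow> 'g \<Rightarrow> 'g)
    \<Rightarrow> ('g \<Rightarrow> 'v::ab_group_add \<Rightarrow> 'v) \<Rightarrow> ('g \<Rightarrow> 'v \<Rightarrow> 'v) \<Rightarrow> ('v \<Rightarrow> 'g)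
    \<Rightarrow> nat \<Rightarrow> ('v list \<Rightarrow> 'g) \<Rightarrow> 'v list \<Rightarrow> 'g" where
  "coboundary sG br rhoL rhoR T n f vs =
     (let w = arg vs; s = (\<lambda>e::int. sG (of_int e)) in
       (\<Sum>i\<in>{1..n}. s ((-1)^(i+1)) (br (T (w i)) (f (map w ([1..<i] @ [i+1..<n+2])))))
     - (\<Sum>i\<in>{1..n}. s ((-1)^(i+1)) (T (rhoR (f (map w ([1..<i] @ [i+1..<n+2]))) (w i))))
     + s ((-1)^(n+1)) (br (f (map w [1..<n+1])) (T (w (n+1))))
     + s ((-1)^n) (T (rhoL (f (map w [1..<n+1])) (w (n+1))))
     + (\<Sum>(i,j)\<in>{(i,j). 1 \<le> i \<and> i < j \<and> j \<le> n+1}.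
          s ((-1)^i) (f (map w ([1..<i] @ [i+1..<j]) @ [rhoL (T (w i)) (w j) + rhoR (T (w j)) (w i)]
                         @ map w [j+1..<n+2]))))"

definition cobracket ::
  "('k::field \<Rightarrow> 'g::ab_group_add \<Rightarrow> 'g) \<Rightarrow> ('g \<Rightarrow> 'g \<Rightarrow> 'g)
    \<Rightarrow> ('g \<Rightarrow> 'v::ab_group_add \<Rightarrow> 'v) \<Rightarrow> ('g \<Rightarrow> 'v \<Rightarrow> 'v)
    \<Rightarrow> nat \<Rightarrow> ('v list \<Rightarrow> 'g) \<Rightarrow> nat \<Rightarrow> ('v list \<Rightarrow> 'g) \<Rightarrow> 'v list \<Rightarrow> 'g" where
  "cobracket sG br rhoL rhoR m g1 n g2 vs =
     (let w = arg vs; s = (\<lambda>e::int. sG (of_int e)) in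
       (\<Sum>k\<in>{1..m}. \<Sum>\<sigma>\<in>shuffles [k-1, n].
          s ((-1)^((k-1)*n+1) * sign \<sigma>)
            (g1 (map (w \<circ> \<sigma>) [1..<k] @ [rhoL (g2 (map (w \<circ> \<sigma>) [k..<k+n])) (w (k+n))]
                 @ map w [k+n+1..<m+n+1])))
     + (\<Sum>k\<in>{2..m+1}. \<Sum>\<sigma>\<in>{\<sigma>\<in>shuffles [k-2, n, 1]. \<sigma> (k+n-2) = k+n-1}.
          s ((-1)^(k*n) * sign \<sigma>)
            (g1 (map (w \<circ> \<sigma>) [1..<k-1] @ [rhoR (g2 (map (w \<circ> \<sigma>) [k-1..<k+n-1])) (w (\<sigma> (k+n-1)))]
                 @ map w [k+n..<m+n+1])))
     + (\<Sum>k\<in>{1..m}. \<Sum>\<sigma>\<in>shuffles [k-1, n-1].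
          s ((-1)^((k-1)*n) * sign \<sigma>)
            (br (g2 (map (w \<circ> \<sigma>) [k..<k+n-1] @ [w (k+n-1)]))
                (g1 (map (w \<circ> \<sigma>) [1..<k] @ map w [k+n..<m+n+1]))))
     + (\<Sum>\<sigma>\<in>shuffles [m, n-1].
          s ((-1)^(m*n+1) * sign \<sigma>)
            (br (g1 (map (w \<circ> \<sigma>) [1..<m+1]))
                (g2 (map (w \<circ> \<sigma>) [m+1..<m+n] @ [w (m+n)]))))
     + (\<Sum>k\<in>{1..n}. \<Sum>\<sigma>\<in>shuffles [k-1, m].
          s ((-1)^(m*(k+n-1)) * sign \<sigma>)
            (g2 (map (w \<circ> \<sigma>) [1..<k] @ [rhoL (g1 (map (w \<circ> \<sigma>) [k..<k+m])) (w (k+m))]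
                 @ map w [k+m+1..<m+n+1])))
     + (\<Sum>k\<in>{1..n}. \<Sum>\<sigma>\<in>{\<sigma>\<in>shuffles [k-1, m, 1]. \<sigma> (k+m-1) = k+m}.
          s ((-1)^(m*(k+n-1)+1) * sign \<sigma>)
            (g2 (map (w \<circ> \<sigma>) [1..<k] @ [rhoR (g1 (map (w \<circ> \<sigma>) [k..<k+m])) (w (\<sigma> (k+m)))]
                 @ map w [k+m+1..<m+n+1]))))"

end

theory Submission
  imports Defs
begin


definition cyc :: "nat \<Rightarrow> nat \<Rightarrow> nat \<Rightarrow> nat" where
  "cyc i k p = (if p = k \<and> i \<le> k then i else if i \<le> p \<and> p < k then p + 1 else p)"

definition dd :: "nat \<Rightarrow> nat \<Rightarrow> nat" where
  "dd i p = (if p = 1 then i else if 2 \<le> p \<and> p \<le> i then p - 1 else p)"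

lemma perm_id': "(\<lambda>x. x) permutes S"
  using permutes_id unfolding id_def .

lemma cyc_refl: "cyc i i = id"
  by (rule ext) (simp add: cyc_def)

lemma cyc_Suc: "i \<le> k \<Longrightarrow> cyc i (Suc k) = cyc i k \<circ> transpose k (Suc k)"
  by (rule ext) (auto simp: cyc_def transpose_def)

lemma cyc_props:
  assumes "i \<le> k"
  shows "permutation (cyc i k) \<and> sign (cyc i k) = (-1)^(k-i) \<and>
         (\<forall>N. 1 \<le> i \<longrightarrow> k \<le> N \<longrightarrow> cyc i k permutes {1..N})"
  using assms
proof (induction k rule: dec_induct)
  case base
  then show ?case by (simp add: cyc_refl perm_id')
next
  case (step k)
  have e: "Suc k - i = Suc (k - i)" using step.hyps by simp
  have P: "permutation (cyc i k)" and S: "sign (cyc i k) = (-1)^(k-i)"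
    and Q: "\<And>N. 1 \<le> i \<Longrightarrow> k \<le> N \<Longrightarrow> cyc i k permutes {1..N}" using step.IH by auto
  have "permutation (cyc i k \<circ> transpose k (Suc k))"
    by (rule permutation_compose[OF P permutation_swap_id])
  moreover have "sign (cyc i k \<circ> transpose k (Suc k)) = (-1)^(Suc k - i)"
    by (simp only: sign_compose[OF P permutation_swap_id] S sign_swap_id e) simp
  moreover have "cyc i k \<circ> transpose k (Suc k) permutes {1..N}" if "1 \<le> i" "Suc k \<le> N" for N
    by (rule permutes_compose[OF permutes_swap_id Q]) (use that step.hyps in auto)
  ultimately show ?case unfolding cyc_Suc[OF step.hyps(1)] by blast
qed

lemma dd_one: "dd 1 = id"
  by (rule ext) (simp add: dd_def)

lemma dd_Suc: "1 \<le> i \<Longrightarrow> dd (Suc i) = transpose i (Suc i) \<circ> dd i"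
  by (rule ext) (auto simp: dd_def transpose_def)

lemma dd_props:
  assumes "1 \<le> i"
  shows "permutation (dd i) \<and> sign (dd i) = (-1)^(i-1) \<and>
         (\<forall>N. i \<le> N \<longrightarrow> dd i permutes {1..N})"
  using assms
proof (induction i rule: dec_induct)
  case base
  then show ?case using dd_one by (simp add: perm_id')
next
  case (step k)
  have e: "Suc k - 1 = Suc (k - 1)" using step.hyps by simp
  have P: "permutation (dd k)" and S: "sign (dd k) = (-1)^(k-1)"
    and Q: "\<And>N. k \<le> N \<Longrightarrow> dd k permutes {1..N}" using step.IH by auto
  have "permutation (transpose k (Suc k) \<circ> dd k)"
    by (rule permutation_compose[OF permutation_swap_id P])
  moreover have "sign (transpose k (Suc k) \<circ> dd k) = (-1)^(Suc k - 1)"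
    by (simp only: sign_compose[OF permutation_swap_id P] S sign_swap_id e) simp
  moreover have "transpose k (Suc k) \<circ> dd k permutes {1..N}" if "Suc k \<le> N" for N
    by (rule permutes_compose[OF Q permutes_swap_id]) (use that step.hyps in auto)
  ultimately show ?case unfolding dd_Suc[OF step.hyps(1)] by blast
qed

lemma same_block2: "same_block [a, b] x y \<longleftrightarrow>
   (0 < x \<and> x \<le> a \<and> 0 < y \<and> y \<le> a) \<or> (a < x \<and> x \<le> a + b \<and> a < y \<and> y \<le> a + b)"
  unfolding same_block_def by (auto simp: less_Suc_eq numeral_2_eq_2)

lemma same_block3: "same_block [a, b, c] x y \<longleftrightarrow>
   (0 < x \<and> x \<le> a \<and> 0 < y \<and> y \<le> a) \<or> (a < x \<and> x \<le> a + b \<and> a < y \<and> y \<le> a + b)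
   \<or> (a + b < x \<and> x \<le> a + b + c \<and> a + b < y \<and> y \<le> a + b + c)"
  unfolding same_block_def by (auto simp: less_Suc_eq numeral_3_eq_3)

lemma mono_gap:
  assumes "\<forall>a b. lo \<le> a \<longrightarrow> a < b \<longrightarrow> b \<le> hi \<longrightarrow> (\<sigma>::nat\<Rightarrow>nat) a < \<sigma> b"
    and "lo \<le> p" "p \<le> q" "q \<le> hi"
  shows "\<sigma> p + (q - p) \<le> \<sigma> q"
  using assms(3,4)
proof (induction q rule: dec_induct)
  case base then show ?case by simp
next
  case (step q)
  have "\<sigma> q < \<sigma> (Suc q)" using assms(1) step assms(2) by simp
  then show ?case using step by simp
qed


lemma core_cyc:
  fixes \<sigma> :: "nat \<Rightarrow> nat"
  assumes rng: "\<forall>p\<in>{1..<k}. \<sigma> p \<in> {1..k}" and i: "i \<in> {1..k}" and ne: "\<forall>p\<in>{1..<k}. \<sigma> p \<noteq> i"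
    and mono: "\<forall>a b. 1 \<le> a \<longrightarrow> a < b \<longrightarrow> b < k \<longrightarrow> \<sigma> a < \<sigma> b" and p: "p \<in> {1..<k}"
  shows "\<sigma> p = (if p < i then p else p + 1)"
proof -
  have m: "\<forall>a b. 1 \<le> a \<longrightarrow> a < b \<longrightarrow> b \<le> k - 1 \<longrightarrow> \<sigma> a < \<sigma> b" using mono by auto
  have lo: "q \<le> \<sigma> q" if "q \<in> {1..<k}" for q
    using mono_gap[of 1 "k-1" \<sigma> 1 q, OF m] that bspec[OF rng, of 1] by fastforce
  have hi: "\<sigma> q \<le> q + 1" if "q \<in> {1..<k}" for q
    using mono_gap[of 1 "k-1" \<sigma> q "k-1", OF m] that bspec[OF rng, of "k-1"] by fastforce
  show ?thesis
  proof (cases "p < i")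
    case True
    show ?thesis
    proof (rule ccontr)
      assume "\<sigma> p \<noteq> (if p < i then p else p + 1)"
      with True lo[OF p] hi[OF p] have sp: "\<sigma> p = p + 1" by auto
      have "\<sigma> p + (i - 1 - p) \<le> \<sigma> (i - 1)"
        using mono_gap[of 1 "k-1" \<sigma> p "i-1", OF m] p True i by auto
      moreover have "i - 1 \<in> {1..<k}" using p True i by auto
      then have "\<sigma> (i - 1) \<le> i" using hi[of "i-1"] True by auto
      ultimately have "\<sigma> (i - 1) = i" using sp True by auto
      then show False using ne \<open>i - 1 \<in> {1..<k}\<close> by blast
    qed
  next
    case False
    show ?thesis
    proof (rule ccontr)
      assume "\<sigma> p \<noteq> (if p < i then p else p + 1)"
      with False lo[OF p] hi[OF p] have sp: "\<sigma> p = p" by auto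
      have "\<sigma> i + (p - i) \<le> \<sigma> p"
        using mono_gap[of 1 "k-1" \<sigma> i p, OF m] p False i by auto
      moreover have "i \<le> \<sigma> i" using lo[of i] p False i by auto
      ultimately have "\<sigma> i = i" using sp False by auto
      then show False using ne p False i by auto
    qed
  qed
qed

lemma core_dd:
  fixes \<sigma> :: "nat \<Rightarrow> nat"
  assumes rng: "\<forall>p\<in>{2..n}. \<sigma> p \<in> {1..n}" and i: "i \<in> {1..n}" and ne: "\<forall>p\<in>{2..n}. \<sigma> p \<noteq> i"
    and mono: "\<forall>a b. 2 \<le> a \<longrightarrow> a < b \<longrightarrow> b \<le> n \<longrightarrow> \<sigma> a < \<sigma> b" and p: "p \<in> {2..n}"
  shows "\<sigma> p = (if p \<le> i then p - 1 else p)"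
proof -
  have m: "\<forall>a b. 2 \<le> a \<longrightarrow> a < b \<longrightarrow> b \<le> n \<longrightarrow> \<sigma> a < \<sigma> b" using mono by auto
  have lo: "q - 1 \<le> \<sigma> q" if "q \<in> {2..n}" for q
    using mono_gap[of 2 n \<sigma> 2 q, OF m] that bspec[OF rng, of 2] by fastforce
  have hi: "\<sigma> q \<le> q" if "q \<in> {2..n}" for q
    using mono_gap[of 2 n \<sigma> q n, OF m] that bspec[OF rng, of n] by fastforce
  show ?thesis
  proof (cases "p \<le> i")
    case True
    show ?thesis
    proof (rule ccontr)
      assume "\<sigma> p \<noteq> (if p \<le> i then p - 1 else p)"
      with True lo[OF p] hi[OF p] have sp: "\<sigma> p = p" by auto
      have "\<sigma> p + (i - p) \<le> \<sigma> i"
        using mono_gap[of 2 n \<sigma> p i, OF m] p True i by auto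
      moreover have "\<sigma> i \<le> i" using hi[of i] p True i by auto
      ultimately have "\<sigma> i = i" using sp True by auto
      then show False using ne p True i by auto
    qed
  next
    case False
    show ?thesis
    proof (rule ccontr)
      assume "\<sigma> p \<noteq> (if p \<le> i then p - 1 else p)"
      with False lo[OF p] hi[OF p] have sp: "\<sigma> p = p - 1" by auto
      have "\<sigma> (i + 1) + (p - (i + 1)) \<le> \<sigma> p"
        using mono_gap[of 2 n \<sigma> "i+1" p, OF m] p False i by auto
      moreover have "i \<le> \<sigma> (i + 1)" using lo[of "i+1"] p False i by auto
      ultimately have "\<sigma> (i + 1) = i" using sp False by auto
      then show False using ne p False i by auto
    qed
  qed
qed

lemma core_id:
  fixes \<sigma> :: "nat \<Rightarrow> nat"
  assumes rng: "\<forall>p\<in>{1..N}. \<sigma> p \<in> {1..N}"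
    and mono: "\<forall>a b. 1 \<le> a \<longrightarrow> a < b \<longrightarrow> b \<le> N \<longrightarrow> \<sigma> a < \<sigma> b" and p: "p \<in> {1..N}"
  shows "\<sigma> p = p"
proof -
  have m: "\<forall>a b. 1 \<le> a \<longrightarrow> a < b \<longrightarrow> b \<le> N \<longrightarrow> \<sigma> a < \<sigma> b" using mono by auto
  have "p \<le> \<sigma> p"
    using mono_gap[of 1 N \<sigma> 1 p, OF m] p bspec[OF rng, of 1] by fastforce
  moreover have "\<sigma> p \<le> p"
    using mono_gap[of 1 N \<sigma> p N, OF m] p bspec[OF rng, of N] by fastforce
  ultimately show ?thesis by simp
qed


lemma shuffles_A: "shuffles [0, N] = {id}"
proof
  show "shuffles [0, N] \<subseteq> {id}"
  proof
    fix \<sigma> assume "\<sigma> \<in> shuffles [0, N]"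
    then have P: "\<sigma> permutes {1..N}" and M: "\<forall>a b. 1 \<le> a \<longrightarrow> a < b \<longrightarrow> b \<le> N \<longrightarrow> \<sigma> a < \<sigma> b"
      by (auto simp: shuffles_def same_block2)
    have "\<sigma> p = p" for p
    proof (cases "p \<in> {1..N}")
      case True
      show ?thesis by (rule core_id[OF _ M True]) (use permutes_in_image[OF P] in auto)
    next
      case False then show ?thesis using permutes_not_in[OF P] by auto
    qed
    then show "\<sigma> \<in> {id}" by auto
  qed
next
  show "{id} \<subseteq> shuffles [0, N]" by (auto simp: shuffles_def)
qed

lemma cyc_app: "cyc i k p = (if p = k \<and> i \<le> k then i else if i \<le> p \<and> p < k then p + 1 else p)"
  by (simp add: cyc_def)

lemma shuffles_C:
  assumes k: "1 \<le> k"
  shows "shuffles [k-1, 1] = (\<lambda>i. cyc i k) ` {1..k}"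
proof
  show "shuffles [k-1, 1] \<subseteq> (\<lambda>i. cyc i k) ` {1..k}"
  proof
    fix \<sigma> assume "\<sigma> \<in> shuffles [k-1, 1]"
    then have P: "\<sigma> permutes {1..k}" and H: "\<And>a b. 1 \<le> a \<Longrightarrow> a < b \<Longrightarrow> b \<le> k \<Longrightarrow> same_block [k-1,1] a b \<Longrightarrow> \<sigma> a < \<sigma> b"
      using k by (auto simp: shuffles_def)
    have M: "\<forall>a b. 1 \<le> a \<longrightarrow> a < b \<longrightarrow> b < k \<longrightarrow> \<sigma> a < \<sigma> b"
      by (intro allI impI H) (auto simp: same_block2)
    define i where "i = \<sigma> k"
    have i: "i \<in> {1..k}" unfolding i_def using permutes_in_image[OF P] k by auto
    have rng: "\<forall>p\<in>{1..<k}. \<sigma> p \<in> {1..k}" using permutes_in_image[OF P] by auto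
    have ne: "\<forall>p\<in>{1..<k}. \<sigma> p \<noteq> i" unfolding i_def using permutes_inj[OF P]
      by (auto dest: injD)
    have "\<sigma> p = cyc i k p" for p
    proof -
      consider "p \<in> {1..<k}" | "p = k" | "p \<notin> {1..k}" by fastforce
      then show ?thesis
      proof cases
        case 1 then show ?thesis using core_cyc[OF rng i ne M 1] i by (auto simp: cyc_def)
      next
        case 2 then show ?thesis using i by (simp add: cyc_def i_def)
      next
        case 3 then show ?thesis using permutes_not_in[OF P] i by (auto simp: cyc_def)
      qed
    qed
    then have "\<sigma> = cyc i k" by auto
    then show "\<sigma> \<in> (\<lambda>i. cyc i k) ` {1..k}" using i by auto
  qed
next
  show "(\<lambda>i. cyc i k) ` {1..k} \<subseteq> shuffles [k-1, 1]"
  proof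
    fix \<sigma> assume "\<sigma> \<in> (\<lambda>i. cyc i k) ` {1..k}"
    then obtain i where i: "i \<in> {1..k}" and s: "\<sigma> = cyc i k" by auto
    have "\<sigma> permutes {1..k}" using cyc_props[of i k] i s by auto
    then show "\<sigma> \<in> shuffles [k-1, 1]" using k i s
      by (auto simp: shuffles_def same_block2 cyc_def)
  qed
qed

lemma shuffles_D_core:
  assumes P: "\<sigma> permutes {1..k+1}" and k: "1 \<le> k" and sk: "\<sigma> k = k + 1"
    and M: "\<forall>a b. 1 \<le> a \<longrightarrow> a < b \<longrightarrow> b < k \<longrightarrow> \<sigma> a < \<sigma> b"
  shows "\<sigma> \<in> (\<lambda>i. cyc i (k+1)) ` {1..k}"
proof -
  define i where "i = \<sigma> (k+1)"
  have inj: "inj \<sigma>" using permutes_inj[OF P] .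
  have "i \<noteq> k + 1" unfolding i_def using sk injD[OF inj, of "k+1" k] by auto
  then have i: "i \<in> {1..k}" unfolding i_def using permutes_in_image[OF P] k by fastforce
  have rng: "\<forall>p\<in>{1..<k}. \<sigma> p \<in> {1..k}"
  proof
    fix p assume p: "p \<in> {1..<k}"
    have "\<sigma> p \<noteq> k + 1" using sk injD[OF inj, of p k] p by auto
    then show "\<sigma> p \<in> {1..k}" using permutes_in_image[OF P] p by fastforce
  qed
  have ne: "\<forall>p\<in>{1..<k}. \<sigma> p \<noteq> i" unfolding i_def using inj
    by (auto dest: injD)
  have "\<sigma> p = cyc i (k+1) p" for p
  proof -
    consider "p \<in> {1..<k}" | "p = k" | "p = k + 1" | "p \<notin> {1..k+1}" by fastforce
    then show ?thesis
    proof cases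
      case 1 then show ?thesis using core_cyc[OF rng i ne M 1] i by (auto simp: cyc_def)
    next
      case 2 then show ?thesis using i sk by (simp add: cyc_def)
    next
      case 3 then show ?thesis using i by (simp add: cyc_def i_def)
    next
      case 4 then show ?thesis using permutes_not_in[OF P] i by (auto simp: cyc_def)
    qed
  qed
  then have "\<sigma> = cyc i (k+1)" by auto
  then show ?thesis using i by auto
qed

lemma shuffles_D:
  assumes k: "1 \<le> k"
  shows "{\<sigma> \<in> shuffles [k-1, 1, 1]. \<sigma> k = k + 1} = (\<lambda>i. cyc i (k+1)) ` {1..k}"
proof
  show "{\<sigma> \<in> shuffles [k-1, 1, 1]. \<sigma> k = k + 1} \<subseteq> (\<lambda>i. cyc i (k+1)) ` {1..k}"
  proof
    fix \<sigma> assume "\<sigma> \<in> {\<sigma> \<in> shuffles [k-1, 1, 1]. \<sigma> k = k + 1}"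
    then have P: "\<sigma> permutes {1..k+1}" and H: "\<And>a b. 1 \<le> a \<Longrightarrow> a < b \<Longrightarrow> b \<le> k+1 \<Longrightarrow> same_block [k-1,1,1] a b \<Longrightarrow> \<sigma> a < \<sigma> b"
      and sk: "\<sigma> k = k + 1"
      using k by (auto simp: shuffles_def)
    have M: "\<forall>a b. 1 \<le> a \<longrightarrow> a < b \<longrightarrow> b < k \<longrightarrow> \<sigma> a < \<sigma> b"
      by (intro allI impI H) (auto simp: same_block3)
    show "\<sigma> \<in> (\<lambda>i. cyc i (k+1)) ` {1..k}" by (rule shuffles_D_core[OF P k sk M])
  qed
next
  show "(\<lambda>i. cyc i (k+1)) ` {1..k} \<subseteq> {\<sigma> \<in> shuffles [k-1, 1, 1]. \<sigma> k = k + 1}"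
  proof
    fix \<sigma> assume "\<sigma> \<in> (\<lambda>i. cyc i (k+1)) ` {1..k}"
    then obtain i where i: "i \<in> {1..k}" and s: "\<sigma> = cyc i (k+1)" by auto
    have "\<sigma> permutes {1..k+1}" using cyc_props[of i "k+1"] i s by auto
    then show "\<sigma> \<in> {\<sigma> \<in> shuffles [k-1, 1, 1]. \<sigma> k = k + 1}" using k i s
      by (auto simp: shuffles_def same_block3 cyc_def)
  qed
qed

lemma shuffles_E:
  assumes k: "1 \<le> k"
  shows "{\<sigma> \<in> shuffles [0, k, 1]. \<sigma> k = k + 1} = (\<lambda>i. cyc i (k+1)) ` {1..k}"
proof
  show "{\<sigma> \<in> shuffles [0, k, 1]. \<sigma> k = k + 1} \<subseteq> (\<lambda>i. cyc i (k+1)) ` {1..k}"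
  proof
    fix \<sigma> assume "\<sigma> \<in> {\<sigma> \<in> shuffles [0, k, 1]. \<sigma> k = k + 1}"
    then have P: "\<sigma> permutes {1..k+1}" and H: "\<And>a b. 1 \<le> a \<Longrightarrow> a < b \<Longrightarrow> b \<le> k+1 \<Longrightarrow> same_block [0,k,1] a b \<Longrightarrow> \<sigma> a < \<sigma> b"
      and sk: "\<sigma> k = k + 1"
      using k by (auto simp: shuffles_def)
    have M: "\<forall>a b. 1 \<le> a \<longrightarrow> a < b \<longrightarrow> b < k \<longrightarrow> \<sigma> a < \<sigma> b"
      by (intro allI impI H) (auto simp: same_block3)
    show "\<sigma> \<in> (\<lambda>i. cyc i (k+1)) ` {1..k}" by (rule shuffles_D_core[OF P k sk M])
  qed
next
  show "(\<lambda>i. cyc i (k+1)) ` {1..k} \<subseteq> {\<sigma> \<in> shuffles [0, k, 1]. \<sigma> k = k + 1}"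
  proof
    fix \<sigma> assume "\<sigma> \<in> (\<lambda>i. cyc i (k+1)) ` {1..k}"
    then obtain i where i: "i \<in> {1..k}" and s: "\<sigma> = cyc i (k+1)" by auto
    have "\<sigma> permutes {1..k+1}" using cyc_props[of i "k+1"] i s by auto
    then show "\<sigma> \<in> {\<sigma> \<in> shuffles [0, k, 1]. \<sigma> k = k + 1}" using k i s
      by (auto simp: shuffles_def same_block3 cyc_def)
  qed
qed

lemma shuffles_B:
  assumes n: "1 \<le> n"
  shows "shuffles [1, n-1] = dd ` {1..n}"
proof
  show "shuffles [1, n-1] \<subseteq> dd ` {1..n}"
  proof
    fix \<sigma> assume "\<sigma> \<in> shuffles [1, n-1]"
    then have P: "\<sigma> permutes {1..n}" and M: "\<forall>a b. 2 \<le> a \<longrightarrow> a < b \<longrightarrow> b \<le> n \<longrightarrow> \<sigma> a < \<sigma> b"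
      using n by (auto simp: shuffles_def same_block2)
    define i where "i = \<sigma> 1"
    have i: "i \<in> {1..n}" unfolding i_def using permutes_in_image[OF P] n by auto
    have rng: "\<forall>p\<in>{2..n}. \<sigma> p \<in> {1..n}" using permutes_in_image[OF P] by auto
    have ne: "\<forall>p\<in>{2..n}. \<sigma> p \<noteq> i" unfolding i_def using permutes_inj[OF P]
      by (auto dest: injD)
    have "\<sigma> p = dd i p" for p
    proof -
      consider "p \<in> {2..n}" | "p = 1" | "p \<notin> {1..n}" by fastforce
      then show ?thesis
      proof cases
        case 1 then show ?thesis using core_dd[OF rng i ne M 1] i by (auto simp: dd_def)
      next
        case 2 then show ?thesis using i by (simp add: dd_def i_def)
      next
        case 3 then show ?thesis using permutes_not_in[OF P] i by (auto simp: dd_def)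
      qed
    qed
    then have "\<sigma> = dd i" by auto
    then show "\<sigma> \<in> dd ` {1..n}" using i by auto
  qed
next
  show "dd ` {1..n} \<subseteq> shuffles [1, n-1]"
  proof
    fix \<sigma> assume "\<sigma> \<in> dd ` {1..n}"
    then obtain i where i: "i \<in> {1..n}" and s: "\<sigma> = dd i" by auto
    have "\<sigma> permutes {1..n}" using dd_props[of i] i s by auto
    then show "\<sigma> \<in> shuffles [1, n-1]" using n i s
      by (auto simp: shuffles_def same_block2 dd_def)
  qed
qed

lemma inj_cyc: "inj_on (\<lambda>i. cyc i k) {1..k}"
  by (rule inj_onI) (metis atLeastAtMost_iff cyc_def)

lemma inj_dd: "inj_on dd {1..n}"
  by (rule inj_onI) (metis dd_def)



lemma pw_even: "even (a + b) \<Longrightarrow> (-1::int)^a = (-1)^b"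
  by (auto simp: minus_one_power_iff)
lemma pw_odd: "odd (a + b) \<Longrightarrow> (-1::int)^a = -((-1)^b)"
  by (auto simp: minus_one_power_iff)

lemma sign_lem1: "1 \<le> n \<Longrightarrow> (-1::int)^(n-1) * (-1) = (-1)^n"
proof -
  assume a: "1 \<le> n"
  have e: "n - 1 + 1 + n = 2 * n" using a by simp
  show ?thesis using pw_even[of "n-1+1" n] unfolding e by (simp add: power_add[symmetric])
qed
lemma sign_lem2: "1 \<le> i \<Longrightarrow> i \<le> n \<Longrightarrow> (-1::int)^(n-1) * (-1)^(n+1-i) = -((-1)^(i+1))"
proof -
  assume a: "1 \<le> i" "i \<le> n"
  have e: "n - 1 + (n + 1 - i) + (i + 1) = 2 * n + 1" using a by simp
  show ?thesis unfolding power_add[symmetric] by (rule pw_odd) (simp only: e, simp)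
qed
lemma sign_lem3: "1 \<le> n \<Longrightarrow> (-1::int)^(n-1) = (-1)^(n+1)"
proof -
  assume a: "1 \<le> n"
  have e: "n - 1 + (n + 1) = 2 * n" using a by simp
  show ?thesis by (rule pw_even) (simp only: e, simp)
qed
lemma sign_lem4: "1 \<le> i \<Longrightarrow> i \<le> n \<Longrightarrow> (-1::int)^(n-1) * ((-1)^(n+1) * (-1)^(i-1)) = (-1)^(i+1)"
proof -
  assume a: "1 \<le> i" "i \<le> n"
  have e: "n - 1 + (n + 1 + (i - 1)) + (i + 1) = 2 * (n + i)" using a by simp
  show ?thesis unfolding power_add[symmetric] by (rule pw_even) (simp only: e, simp)
qed
lemma sign_lem5: "1 \<le> i \<Longrightarrow> i \<le> k \<Longrightarrow> k \<le> n \<Longrightarrow> (-1::int)^(n-1) * ((-1)^(k+n-1) * (-1)^(k-i)) = (-1)^i"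
proof -
  assume a: "1 \<le> i" "i \<le> k" "k \<le> n"
  have e: "n - 1 + (k + n - 1 + (k - i)) + i = 2 * (n + k - 1)" using a by simp
  show ?thesis unfolding power_add[symmetric] by (rule pw_even) (simp only: e, simp)
qed
lemma sign_lem6: "1 \<le> i \<Longrightarrow> i \<le> k \<Longrightarrow> k \<le> n \<Longrightarrow> (-1::int)^(n-1) * ((-1)^(k+n) * (-1)^(k+1-i)) = (-1)^i"
proof -
  assume a: "1 \<le> i" "i \<le> k" "k \<le> n"
  have e: "n - 1 + (k + n + (k + 1 - i)) + i = 2 * (n + k)" using a by simp
  show ?thesis unfolding power_add[symmetric] by (rule pw_even) (simp only: e, simp)
qed

lemma ml_add:
  assumes "multilinear sV sG n f" "length L + 1 + length R = n"
  shows "f (L @ a # R) + f (L @ b # R) = f (L @ (a + b) # R)"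
proof -
  have "Vector_Spaces.linear sV sG (\<lambda>v. f ((L @ a # R)[length L := v]))"
  proof -
    have "length (L @ a # R) = n" "length L < n" using assms(2) by auto
    then show ?thesis using assms(1) unfolding multilinear_def by blast
  qed
  then show ?thesis unfolding Vector_Spaces.linear_iff by (simp add: list_update_append)
qed


lemma map_cyc:
  assumes "1 \<le> i" "i \<le> k" "k \<le> K"
  shows "map (w \<circ> cyc i K) [1..<k] = map w ([1..<i] @ [i+1..<k+1])"
proof -
  have s: "[1..<k] = [1..<i] @ [i..<k]" using assms by (metis le_add_diff_inverse upt_add_eq_append)
  have a: "map (w \<circ> cyc i K) [1..<i] = map w [1..<i]"
    by (rule map_cong) (auto simp: cyc_def)
  have b: "map (w \<circ> cyc i K) [i..<k] = map (w \<circ> Suc) [i..<k]"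
    using assms by (intro map_cong) (auto simp: cyc_def)
  show ?thesis unfolding s map_append a b using map_Suc_upt[of i k]
    by (metis Suc_eq_plus1 map_map)
qed

lemma map_dd:
  assumes "1 \<le> i" "i \<le> n"
  shows "map (w \<circ> dd i) [2..<n+1] = map w ([1..<i] @ [i+1..<n+1])"
proof -
  have s: "[2..<n+1] = [Suc 1..<Suc i] @ [i+1..<n+1]" using assms
    by (metis Suc_1 Suc_eq_plus1 Suc_le_mono le_add_diff_inverse upt_add_eq_append)
  have a: "map (w \<circ> dd i) [Suc 1..<Suc i] = map (w \<circ> dd i \<circ> Suc) [1..<i]"
    by (simp only: map_Suc_upt[symmetric] map_map comp_assoc)
  have a2: "map (w \<circ> dd i \<circ> Suc) [1..<i] = map w [1..<i]"
    by (rule map_cong) (auto simp: dd_def)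
  have b: "map (w \<circ> dd i) [i+1..<n+1] = map w [i+1..<n+1]"
    using assms by (intro map_cong) (auto simp: dd_def)
  show ?thesis unfolding s map_append a a2 b ..
qed


theorem theorem2p10:
  fixes sG :: "'k::field \<Rightarrow> 'g::ab_group_add \<Rightarrow> 'g"
    and sV :: "'k \<Rightarrow> 'v::ab_group_add \<Rightarrow> 'v"
    and br :: "'g \<Rightarrow> 'g \<Rightarrow> 'g"
    and rhoL rhoR :: "'g \<Rightarrow> 'v \<Rightarrow> 'v"
    and T :: "'v \<Rightarrow> 'g"
    and n :: nat and f :: "'v list \<Rightarrow> 'g" and vs :: "'v list"
  assumes "is_leibniz_algebra sG br"
    and "is_representation sG br sV rhoL rhoR"
    and "is_relative_RB sG br sV rhoL rhoR T"
    and "n \<ge> 1"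
    and "multilinear sV sG n f"
    and "length vs = n + 1"
  shows "coboundary sG br rhoL rhoR T n f vs
         = sG (of_int ((-1)^(n-1))) (cobracket sG br rhoL rhoR 1 (\<lambda>xs. T (hd xs)) n f vs)"
proof -
  interpret G: vector_space sG using assms(1) unfolding is_leibniz_algebra_def by auto
  have n: "1 \<le> n" by fact
  define w where "w = arg vs"
  define \<epsilon> where "\<epsilon> = ((-1::int)^(n-1))"
  define C1 where "C1 = (\<Sum>i\<in>{1..n}. sG (of_int ((-1)^(i+1))) (br (T (w i)) (f (map w ([1..<i] @ [i+1..<n+2])))))"
  define C2 where "C2 = (\<Sum>i\<in>{1..n}. sG (of_int ((-1)^(i+1))) (T (rhoR (f (map w ([1..<i] @ [i+1..<n+2]))) (w i))))"
  define C3 where "C3 = sG (of_int ((-1)^(n+1))) (br (f (map w [1..<n+1])) (T (w (n+1))))"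
  define C4 where "C4 = sG (of_int ((-1)^n)) (T (rhoL (f (map w [1..<n+1])) (w (n+1))))"
  define F where "F = (\<lambda>i j. f (map w ([1..<i] @ [i+1..<j]) @ [rhoL (T (w i)) (w j) + rhoR (T (w j)) (w i)] @ map w [j+1..<n+2]))"
  define C5 where "C5 = (\<Sum>(i,j)\<in>{(i,j). 1 \<le> i \<and> i < j \<and> j \<le> n+1}. sG (of_int ((-1)^i)) (F i j))"
  have cob: "coboundary sG br rhoL rhoR T n f vs = C1 - C2 + C3 + C4 + C5"
    unfolding coboundary_def Let_def C1_def C2_def C3_def C4_def C5_def F_def w_def ..
  define B1 where "B1 = (\<Sum>k\<in>{1..1}. \<Sum>\<sigma>\<in>shuffles [k-1, n]. sG (of_int ((-1)^((k-1)*n+1) * sign \<sigma>)) (T (hd (map (w \<circ> \<sigma>) [1..<k] @ [rhoL (f (map (w \<circ> \<sigma>) [k..<k+n])) (w (k+n))] @ map w [k+n+1..<1+n+1]))))"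
  define B2 where "B2 = (\<Sum>k\<in>{2..1+1}. \<Sum>\<sigma>\<in>{\<sigma>\<in>shuffles [k-2, n, 1]. \<sigma> (k+n-2) = k+n-1}. sG (of_int ((-1)^(k*n) * sign \<sigma>)) (T (hd (map (w \<circ> \<sigma>) [1..<k-1] @ [rhoR (f (map (w \<circ> \<sigma>) [k-1..<k+n-1])) (w (\<sigma> (k+n-1)))] @ map w [k+n..<1+n+1]))))"
  define B3 where "B3 = (\<Sum>k\<in>{1..1}. \<Sum>\<sigma>\<in>shuffles [k-1, n-1]. sG (of_int ((-1)^((k-1)*n) * sign \<sigma>)) (br (f (map (w \<circ> \<sigma>) [k..<k+n-1] @ [w (k+n-1)])) (T (hd (map (w \<circ> \<sigma>) [1..<k] @ map w [k+n..<1+n+1])))))"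
  define B4 where "B4 = (\<Sum>\<sigma>\<in>shuffles [1, n-1]. sG (of_int ((-1)^(1*n+1) * sign \<sigma>)) (br (T (hd (map (w \<circ> \<sigma>) [1..<1+1]))) (f (map (w \<circ> \<sigma>) [1+1..<1+n] @ [w (1+n)]))))"
  define B5 where "B5 = (\<Sum>k\<in>{1..n}. \<Sum>\<sigma>\<in>shuffles [k-1, 1]. sG (of_int ((-1)^(1*(k+n-1)) * sign \<sigma>)) (f (map (w \<circ> \<sigma>) [1..<k] @ [rhoL (T (hd (map (w \<circ> \<sigma>) [k..<k+1]))) (w (k+1))] @ map w [k+1+1..<1+n+1])))"
  define B6 where "B6 = (\<Sum>k\<in>{1..n}. \<Sum>\<sigma>\<in>{\<sigma>\<in>shuffles [k-1, 1, 1]. \<sigma> (k+1-1) = k+1}. sG (of_int ((-1)^(1*(k+n-1)+1) * sign \<sigma>)) (f (map (w \<circ> \<sigma>) [1..<k] @ [rhoR (T (hd (map (w \<circ> \<sigma>) [k..<k+1]))) (w (\<sigma> (k+1)))] @ map w [k+1+1..<1+n+1])))"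
  have cbr: "cobracket sG br rhoL rhoR 1 (\<lambda>xs. T (hd xs)) n f vs = B1 + B2 + B3 + B4 + B5 + B6"
    unfolding cobracket_def Let_def B1_def B2_def B3_def B4_def B5_def B6_def w_def ..
  have b1: "B1 = sG (of_int (-1)) (T (rhoL (f (map w [1..<n+1])) (w (n+1))))"
    unfolding B1_def by (simp add: shuffles_A)
  have b3: "B3 = br (f (map w [1..<n+1])) (T (w (n+1)))"
  proof -
    have "map w [1..<n] @ [w n] = map w [1..<n+1]" using n by simp
    then show ?thesis unfolding B3_def using n by (simp add: shuffles_A)
  qed
  have injc: "\<And>k K. k \<le> K \<Longrightarrow> inj_on (\<lambda>i. cyc i K) {1..k}"
    using inj_cyc by (rule inj_on_subset) auto
  have cK: "\<And>i K. i \<le> K \<Longrightarrow> cyc i K K = i" by (simp add: cyc_def)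
  have b2: "B2 = (\<Sum>i\<in>{1..n}. sG (of_int ((-1)^(n+1-i))) (T (rhoR (f (map w ([1..<i] @ [i+1..<n+2]))) (w i))))"
  proof -
    have "B2 = (\<Sum>\<sigma>\<in>{\<sigma>\<in>shuffles [0,n,1]. \<sigma> n = n+1}. sG (of_int (sign \<sigma>)) (T (rhoR (f (map (w\<circ>\<sigma>) [1..<n+1])) (w (\<sigma> (n+1))))))"
      unfolding B2_def by simp
    also have "\<dots> = (\<Sum>i\<in>{1..n}. sG (of_int (sign (cyc i (n+1)))) (T (rhoR (f (map (w\<circ>cyc i (n+1)) [1..<n+1])) (w (cyc i (n+1) (n+1))))))"
      unfolding shuffles_E[OF n] by (subst sum.reindex[OF injc]) auto
    also have "\<dots> = (\<Sum>i\<in>{1..n}. sG (of_int ((-1)^(n+1-i))) (T (rhoR (f (map w ([1..<i] @ [i+1..<n+2]))) (w i))))"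
    proof (rule sum.cong[OF refl])
      fix i assume i: "i \<in> {1..n}"
      have "sign (cyc i (n+1)) = (-1)^(n+1-i)" using cyc_props[of i "n+1"] i by auto
      moreover have "map (w\<circ>cyc i (n+1)) [1..<n+1] = map w ([1..<i] @ [i+1..<n+2])"
        using map_cyc[of i "n+1" "n+1" w] i by simp
      moreover have "cyc i (n+1) (n+1) = i" using cK[of i "n+1"] i by simp
      ultimately show "sG (of_int (sign (cyc i (n+1)))) (T (rhoR (f (map (w\<circ>cyc i (n+1)) [1..<n+1])) (w (cyc i (n+1) (n+1)))))
        = sG (of_int ((-1)^(n+1-i))) (T (rhoR (f (map w ([1..<i] @ [i+1..<n+2]))) (w i)))" by simp
    qed
    finally show ?thesis .
  qed
  have b4: "B4 = (\<Sum>i\<in>{1..n}. sG (of_int ((-1)^(n+1) * (-1)^(i-1))) (br (T (w i)) (f (map w ([1..<i] @ [i+1..<n+2])))))"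
  proof -
    have "B4 = (\<Sum>\<sigma>\<in>shuffles [1,n-1]. sG (of_int ((-1)^(n+1) * sign \<sigma>)) (br (T (w (\<sigma> 1))) (f (map (w\<circ>\<sigma>) [2..<n+1] @ [w (n+1)]))))"
      unfolding B4_def by (simp add: numeral_2_eq_2)
    also have "\<dots> = (\<Sum>i\<in>{1..n}. sG (of_int ((-1)^(n+1) * sign (dd i))) (br (T (w (dd i 1))) (f (map (w\<circ>dd i) [2..<n+1] @ [w (n+1)]))))"
      unfolding shuffles_B[OF n] by (subst sum.reindex[OF inj_dd]) auto
    also have "\<dots> = (\<Sum>i\<in>{1..n}. sG (of_int ((-1)^(n+1) * (-1)^(i-1))) (br (T (w i)) (f (map w ([1..<i] @ [i+1..<n+2])))))"
    proof (rule sum.cong[OF refl])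
      fix i assume i: "i \<in> {1..n}"
      have "sign (dd i) = (-1)^(i-1)" using dd_props[of i] i by auto
      moreover have "map (w\<circ>dd i) [2..<n+1] @ [w (n+1)] = map w ([1..<i] @ [i+1..<n+2])"
        using map_dd[of i n w] i by simp
      moreover have "dd i 1 = i" by (simp add: dd_def)
      ultimately show "sG (of_int ((-1)^(n+1) * sign (dd i))) (br (T (w (dd i 1))) (f (map (w\<circ>dd i) [2..<n+1] @ [w (n+1)])))
        = sG (of_int ((-1)^(n+1) * (-1)^(i-1))) (br (T (w i)) (f (map w ([1..<i] @ [i+1..<n+2]))))" by simp
    qed
    finally show ?thesis .
  qed
  have b5: "B5 = (\<Sum>k\<in>{1..n}. \<Sum>i\<in>{1..k}. sG (of_int ((-1)^(k+n-1) * (-1)^(k-i))) (f (map w ([1..<i] @ [i+1..<k+1]) @ rhoL (T (w i)) (w (k+1)) # map w [k+2..<n+2])))"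
    unfolding B5_def
  proof (rule sum.cong[OF refl])
    fix k assume k: "k \<in> {1..n}"
    have "(\<Sum>\<sigma>\<in>shuffles [k-1, 1]. sG (of_int ((-1)^(1*(k+n-1)) * sign \<sigma>)) (f (map (w \<circ> \<sigma>) [1..<k] @ [rhoL (T (hd (map (w \<circ> \<sigma>) [k..<k+1]))) (w (k+1))] @ map w [k+1+1..<1+n+1])))
      = (\<Sum>i\<in>{1..k}. sG (of_int ((-1)^(k+n-1) * sign (cyc i k))) (f (map (w \<circ> cyc i k) [1..<k] @ rhoL (T (w (cyc i k k))) (w (k+1)) # map w [k+2..<n+2])))"
    proof -
      have sc: "shuffles [k-1, 1] = (\<lambda>i. cyc i k) ` {1..k}" using k by (intro shuffles_C) auto
      show ?thesis unfolding sc by (subst sum.reindex[OF injc]) (auto simp: add.commute)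
    qed
    also have "\<dots> = (\<Sum>i\<in>{1..k}. sG (of_int ((-1)^(k+n-1) * (-1)^(k-i))) (f (map w ([1..<i] @ [i+1..<k+1]) @ rhoL (T (w i)) (w (k+1)) # map w [k+2..<n+2])))"
    proof (rule sum.cong[OF refl])
      fix i assume i: "i \<in> {1..k}"
      have "sign (cyc i k) = (-1)^(k-i)" using cyc_props[of i k] i by auto
      moreover have "map (w\<circ>cyc i k) [1..<k] = map w ([1..<i] @ [i+1..<k+1])"
        using map_cyc[of i k k w] i by simp
      moreover have "cyc i k k = i" using cK[of i k] i by simp
      ultimately show "sG (of_int ((-1)^(k+n-1) * sign (cyc i k))) (f (map (w \<circ> cyc i k) [1..<k] @ rhoL (T (w (cyc i k k))) (w (k+1)) # map w [k+2..<n+2]))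
         = sG (of_int ((-1)^(k+n-1) * (-1)^(k-i))) (f (map w ([1..<i] @ [i+1..<k+1]) @ rhoL (T (w i)) (w (k+1)) # map w [k+2..<n+2]))" by simp
    qed
    finally show "(\<Sum>\<sigma>\<in>shuffles [k-1, 1]. sG (of_int ((-1)^(1*(k+n-1)) * sign \<sigma>)) (f (map (w \<circ> \<sigma>) [1..<k] @ [rhoL (T (hd (map (w \<circ> \<sigma>) [k..<k+1]))) (w (k+1))] @ map w [k+1+1..<1+n+1])))
      = (\<Sum>i\<in>{1..k}. sG (of_int ((-1)^(k+n-1) * (-1)^(k-i))) (f (map w ([1..<i] @ [i+1..<k+1]) @ rhoL (T (w i)) (w (k+1)) # map w [k+2..<n+2])))" .
  qed
  have b6: "B6 = (\<Sum>k\<in>{1..n}. \<Sum>i\<in>{1..k}. sG (of_int ((-1)^(k+n) * (-1)^(k+1-i))) (f (map w ([1..<i] @ [i+1..<k+1]) @ rhoR (T (w (k+1))) (w i) # map w [k+2..<n+2])))"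
    unfolding B6_def
  proof (rule sum.cong[OF refl])
    fix k assume k: "k \<in> {1..n}"
    have "(\<Sum>\<sigma>\<in>{\<sigma>\<in>shuffles [k-1, 1, 1]. \<sigma> (k+1-1) = k+1}. sG (of_int ((-1)^(1*(k+n-1)+1) * sign \<sigma>)) (f (map (w \<circ> \<sigma>) [1..<k] @ [rhoR (T (hd (map (w \<circ> \<sigma>) [k..<k+1]))) (w (\<sigma> (k+1)))] @ map w [k+1+1..<1+n+1])))
      = (\<Sum>i\<in>{1..k}. sG (of_int ((-1)^(k+n) * sign (cyc i (k+1)))) (f (map (w \<circ> cyc i (k+1)) [1..<k] @ rhoR (T (w (cyc i (k+1) k))) (w (cyc i (k+1) (k+1))) # map w [k+2..<n+2])))"
    proof -
      have sc: "{\<sigma>\<in>shuffles [k-1, 1, 1]. \<sigma> (k+1-1) = k+1} = (\<lambda>i. cyc i (k+1)) ` {1..k}"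
        using k shuffles_D[of k] by auto
      have e: "k + n - 1 + 1 = k + n" using k by auto
      show ?thesis unfolding sc e by (subst sum.reindex[OF injc]) (auto simp: add.commute)
    qed
    also have "\<dots> = (\<Sum>i\<in>{1..k}. sG (of_int ((-1)^(k+n) * (-1)^(k+1-i))) (f (map w ([1..<i] @ [i+1..<k+1]) @ rhoR (T (w (k+1))) (w i) # map w [k+2..<n+2])))"
    proof (rule sum.cong[OF refl])
      fix i assume i: "i \<in> {1..k}"
      have "sign (cyc i (k+1)) = (-1)^(k+1-i)" using cyc_props[of i "k+1"] i by auto
      moreover have "map (w\<circ>cyc i (k+1)) [1..<k] = map w ([1..<i] @ [i+1..<k+1])"
        using map_cyc[of i k "k+1" w] i by simp
      moreover have "cyc i (k+1) (k+1) = i" using cK[of i "k+1"] i by simp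
      moreover have "cyc i (k+1) k = k+1" using i by (simp add: cyc_def)
      ultimately show "sG (of_int ((-1)^(k+n) * sign (cyc i (k+1)))) (f (map (w \<circ> cyc i (k+1)) [1..<k] @ rhoR (T (w (cyc i (k+1) k))) (w (cyc i (k+1) (k+1))) # map w [k+2..<n+2]))
         = sG (of_int ((-1)^(k+n) * (-1)^(k+1-i))) (f (map w ([1..<i] @ [i+1..<k+1]) @ rhoR (T (w (k+1))) (w i) # map w [k+2..<n+2]))" by simp
    qed
    finally show "(\<Sum>\<sigma>\<in>{\<sigma>\<in>shuffles [k-1, 1, 1]. \<sigma> (k+1-1) = k+1}. sG (of_int ((-1)^(1*(k+n-1)+1) * sign \<sigma>)) (f (map (w \<circ> \<sigma>) [1..<k] @ [rhoR (T (hd (map (w \<circ> \<sigma>) [k..<k+1]))) (w (\<sigma> (k+1)))] @ map w [k+1+1..<1+n+1])))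
      = (\<Sum>i\<in>{1..k}. sG (of_int ((-1)^(k+n) * (-1)^(k+1-i))) (f (map w ([1..<i] @ [i+1..<k+1]) @ rhoR (T (w (k+1))) (w i) # map w [k+2..<n+2])))" .
  qed
  have ss: "\<And>a b x. sG (of_int a) (sG (of_int b) x) = sG (of_int (a * b)) x"
    by (simp only: G.scale_scale of_int_mult)
  have e1: "sG (of_int \<epsilon>) B1 = C4"
    by (simp only: b1 ss \<epsilon>_def sign_lem1[OF n] C4_def)
  have e3: "sG (of_int \<epsilon>) B3 = C3"
    by (simp only: b3 \<epsilon>_def sign_lem3[OF n] C3_def)
  have e2: "sG (of_int \<epsilon>) B2 = - C2"
  proof -
    have "sG (of_int \<epsilon>) B2 = (\<Sum>i\<in>{1..n}. sG (of_int (\<epsilon> * (-1)^(n+1-i))) (T (rhoR (f (map w ([1..<i] @ [i+1..<n+2]))) (w i))))"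
      by (simp only: b2 G.scale_sum_right ss)
    also have "\<dots> = (\<Sum>i\<in>{1..n}. - sG (of_int ((-1)^(i+1))) (T (rhoR (f (map w ([1..<i] @ [i+1..<n+2]))) (w i))))"
    proof (rule sum.cong[OF refl])
      fix i assume i: "i \<in> {1..n}"
      have "\<epsilon> * (-1)^(n+1-i) = - ((-1)^(i+1))" unfolding \<epsilon>_def using i by (intro sign_lem2) auto
      then show "sG (of_int (\<epsilon> * (-1)^(n+1-i))) (T (rhoR (f (map w ([1..<i] @ [i+1..<n+2]))) (w i)))
        = - sG (of_int ((-1)^(i+1))) (T (rhoR (f (map w ([1..<i] @ [i+1..<n+2]))) (w i)))"
        by (simp only: of_int_minus G.scale_minus_left)
    qed
    also have "\<dots> = - C2" by (simp only: C2_def sum_negf)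
    finally show ?thesis .
  qed
  have e4: "sG (of_int \<epsilon>) B4 = C1"
  proof -
    have "sG (of_int \<epsilon>) B4 = (\<Sum>i\<in>{1..n}. sG (of_int (\<epsilon> * ((-1)^(n+1) * (-1)^(i-1)))) (br (T (w i)) (f (map w ([1..<i] @ [i+1..<n+2])))))"
      by (simp only: b4 G.scale_sum_right ss)
    also have "\<dots> = C1" unfolding C1_def
    proof (rule sum.cong[OF refl])
      fix i assume i: "i \<in> {1..n}"
      have "\<epsilon> * ((-1)^(n+1) * (-1)^(i-1)) = (-1)^(i+1)" unfolding \<epsilon>_def using i by (intro sign_lem4) auto
      then show "sG (of_int (\<epsilon> * ((-1)^(n+1) * (-1)^(i-1)))) (br (T (w i)) (f (map w ([1..<i] @ [i+1..<n+2]))))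
        = sG (of_int ((-1)^(i+1))) (br (T (w i)) (f (map w ([1..<i] @ [i+1..<n+2]))))"
        by (simp only:)
    qed
    finally show ?thesis .
  qed
  have e5a: "sG (of_int \<epsilon>) (B5 + B6) = (\<Sum>k\<in>{1..n}. \<Sum>i\<in>{1..k}. sG (of_int ((-1)^i)) (F i (k+1)))"
    unfolding b5 b6 G.scale_right_distrib G.scale_sum_right ss sum.distrib[symmetric]
  proof (rule sum.cong[OF refl], rule sum.cong[OF refl])
    fix k i assume k: "k \<in> {1..n}" and i: "i \<in> {1..k}"
    have s5: "\<epsilon> * ((-1)^(k+n-1) * (-1)^(k-i)) = (-1)^i" unfolding \<epsilon>_def using i k by (intro sign_lem5) auto
    have s6: "\<epsilon> * ((-1)^(k+n) * (-1)^(k+1-i)) = (-1)^i" unfolding \<epsilon>_def using i k by (intro sign_lem6) auto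
    have len: "length (map w ([1..<i] @ [i+1..<k+1])) + 1 + length (map w [k+2..<n+2]) = n" using i k by auto
    show "sG (of_int (\<epsilon> * ((-1)^(k+n-1) * (-1)^(k-i)))) (f (map w ([1..<i] @ [i+1..<k+1]) @ rhoL (T (w i)) (w (k+1)) # map w [k+2..<n+2]))
      + sG (of_int (\<epsilon> * ((-1)^(k+n) * (-1)^(k+1-i)))) (f (map w ([1..<i] @ [i+1..<k+1]) @ rhoR (T (w (k+1))) (w i) # map w [k+2..<n+2]))
      = sG (of_int ((-1)^i)) (F i (k+1))"
      unfolding s5 s6 G.scale_right_distrib[symmetric] ml_add[OF assms(5) len] F_def
      by (simp add: add.commute)
  qed
  have e5b: "(\<Sum>k\<in>{1..n}. \<Sum>i\<in>{1..k}. sG (of_int ((-1)^i)) (F i (k+1))) = C5"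
    unfolding C5_def sum.Sigma[OF finite_atLeastAtMost ballI[OF finite_atLeastAtMost]]
    by (rule sum.reindex_bij_witness[where i="\<lambda>(i,j). (j-1, i)" and j="\<lambda>(k,i). (i, k+1)"]) auto
  have dist: "sG (of_int \<epsilon>) (B1+B2+B3+B4+B5+B6) = sG (of_int \<epsilon>) B1 + sG (of_int \<epsilon>) B2 + sG (of_int \<epsilon>) B3 + sG (of_int \<epsilon>) B4 + sG (of_int \<epsilon>) (B5 + B6)"
    by (simp only: G.scale_right_distrib add.assoc)
  show ?thesis unfolding cob cbr \<epsilon>_def[symmetric] dist e1 e2 e3 e4 e5a e5b
    by (simp add: algebra_simps)
qed

end
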